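(* Let $b\ge 2$ and let $G$ be a grid-labelled graph of type $(2,b)$ with at least one edge. Then $\rho(G)$ is separable if and only if $D(G)=D(\Gamma(G))$.
   Context: A grid-labelled graph of type $(a,b)$ is a simple graph $G$ whose vertex set is the grid $[a]\times[b]$; $D(G)$ is its degree matrix and $L(G)=D(G)-A(G)$ its combinatorial Laplacian. If $G$ has $m\ge1$ edges, $\rho(G)=L(G)/(2m)$ is a density matrix on $\mathbb{C}^a\otimes\mathbb{C}^b$ with vertex $(i,j)$ corresponding to $|i\rangle\otimes|j\rangle$. Separable means a convex combination of tensor products of density matrices. The partial transpose $\Gamma(G)$ is the grid-labelled graph of type $(a,b)$ with edge set $\{\{(k,j),(i,l)\}:\{(i,j),(k,l)\}\in E(G)\}$. *)

theory Defs
  imports Complex_Main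
begin

text \<open>Grid-labelled graphs of type (a,b): vertex set [a] x [b], rendered 0-based as
  {0..<a} x {0..<b}. Operators on C^a (x) C^b are matrices indexed by grid vertices,
  vertex (i,j) corresponding to |i> (x) |j>.\<close>

type_synonym vertex = "nat \<times> nat"
type_synonym gmatrix = "vertex \<Rightarrow> vertex \<Rightarrow> complex"

definition grid :: "nat \<Rightarrow> nat \<Rightarrow> vertex set" where
  "grid a b = {0..<a} \<times> {0..<b}"

definition grid_graph :: "nat \<Rightarrow> nat \<Rightarrow> vertex set set \<Rightarrow> bool" where
  "grid_graph a b E \<longleftrightarrow>
     E \<subseteq> {{u, v} | u v. u \<in> grid a b \<and> v \<in> grid a b \<and> u \<noteq> v}"

definition deg :: "vertex set set \<Rightarrow> vertex \<Rightarrow> nat" where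
  "deg E v = card {e \<in> E. v \<in> e}"

definition degree_matrix :: "vertex set set \<Rightarrow> gmatrix" where
  "degree_matrix E u v = (if u = v then of_nat (deg E u) else 0)"

definition adjacency_matrix :: "vertex set set \<Rightarrow> gmatrix" where
  "adjacency_matrix E u v = (if {u, v} \<in> E then 1 else 0)"

definition laplacian :: "vertex set set \<Rightarrow> gmatrix" where
  "laplacian E u v = degree_matrix E u v - adjacency_matrix E u v"

definition rho :: "vertex set set \<Rightarrow> gmatrix" where
  "rho E u v = laplacian E u v / of_nat (2 * card E)"

definition partial_transpose :: "vertex set set \<Rightarrow> vertex set set" where
  "partial_transpose E = {{(k, j), (i, l)} | i j k l. {(i, j), (k, l)} \<in> E}"

definition density :: "'i set \<Rightarrow> ('i \<Rightarrow> 'i \<Rightarrow> complex) \<Rightarrow> bool" where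
  "density I M \<longleftrightarrow>
     (\<forall>x\<in>I. \<forall>y\<in>I. M x y = cnj (M y x)) \<and>
     (\<forall>w :: 'i \<Rightarrow> complex.
        Im (\<Sum>x\<in>I. \<Sum>y\<in>I. cnj (w x) * M x y * w y) = 0 \<and>
        Re (\<Sum>x\<in>I. \<Sum>y\<in>I. cnj (w x) * M x y * w y) \<ge> 0) \<and>
     (\<Sum>x\<in>I. M x x) = 1"

text \<open>Separability on C^a (x) C^b: a (finite) convex combination of tensor
  products A (x) B of density matrices, (A (x) B)((i,j),(k,l)) = A i k * B j l.\<close>
definition separable :: "nat \<Rightarrow> nat \<Rightarrow> gmatrix \<Rightarrow> bool" where
  "separable a b \<rho> \<longleftrightarrow>
     (\<exists>(n::nat) (p :: nat \<Rightarrow> real) (A :: nat \<Rightarrow> nat \<Rightarrow> nat \<Rightarrow> complex)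
        (B :: nat \<Rightarrow> nat \<Rightarrow> nat \<Rightarrow> complex).
        (\<forall>k<n. p k \<ge> 0) \<and> (\<Sum>k<n. p k) = 1 \<and>
        (\<forall>k<n. density {0..<a} (A k) \<and> density {0..<b} (B k)) \<and>
        (\<forall>u\<in>grid a b. \<forall>v\<in>grid a b.
           \<rho> u v = (\<Sum>k<n. of_real (p k) * A k (fst u) (fst v) * B k (snd u) (snd v))))"

end

theory Submission
  imports Defs
begin

definition sepc :: "nat \<Rightarrow> nat \<Rightarrow> gmatrix \<Rightarrow> bool" where
  "sepc a b M \<longleftrightarrow>
     (\<exists>(n::nat) (p :: nat \<Rightarrow> real) (A :: nat \<Rightarrow> nat \<Rightarrow> nat \<Rightarrow> complex)
        (B :: nat \<Rightarrow> nat \<Rightarrow> nat \<Rightarrow> complex).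
        (\<forall>k<n. p k \<ge> 0) \<and>
        (\<forall>k<n. density {0..<a} (A k) \<and> density {0..<b} (B k)) \<and>
        (\<forall>u\<in>grid a b. \<forall>v\<in>grid a b.
           M u v = (\<Sum>k<n. of_real (p k) * A k (fst u) (fst v) * B k (snd u) (snd v))))"

lemma sepc_zero: "(\<forall>u\<in>grid a b. \<forall>v\<in>grid a b. M u v = 0) \<Longrightarrow> sepc a b M"
  unfolding sepc_def by (rule exI[of _ 0]) auto

lemma sepc_cong: "sepc a b M \<Longrightarrow> (\<forall>u\<in>grid a b. \<forall>v\<in>grid a b. M u v = N u v) \<Longrightarrow> sepc a b N"
proof -
  assume h: "sepc a b M" and e: "\<forall>u\<in>grid a b. \<forall>v\<in>grid a b. M u v = N u v"
  from h obtain n and p :: "nat \<Rightarrow> real" and A B where 1: "\<forall>k<n. p k \<ge> 0" "\<forall>k<n. density {0..<a} (A k) \<and> density {0..<b} (B k)"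
    "\<forall>u\<in>grid a b. \<forall>v\<in>grid a b.
           M u v = (\<Sum>k<n. of_real (p k) * A k (fst u) (fst v) * B k (snd u) (snd v))"
    unfolding sepc_def by blast
  show ?thesis unfolding sepc_def
    by (rule exI[of _ n], rule exI[of _ p], rule exI[of _ A], rule exI[of _ B]) (use 1 e in auto)
qed

lemma sepc_add:
  assumes "sepc a b M" "sepc a b N"
  shows "sepc a b (\<lambda>u v. M u v + N u v)"
proof -
  obtain n1 and p1 :: "nat \<Rightarrow> real" and A1 B1 where 1: "\<forall>k<n1. p1 k \<ge> 0" "\<forall>k<n1. density {0..<a} (A1 k) \<and> density {0..<b} (B1 k)"
    "\<forall>u\<in>grid a b. \<forall>v\<in>grid a b.
           M u v = (\<Sum>k<n1. of_real (p1 k) * A1 k (fst u) (fst v) * B1 k (snd u) (snd v))"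
    using assms(1) unfolding sepc_def by blast
  obtain n2 and p2 :: "nat \<Rightarrow> real" and A2 B2 where 2: "\<forall>k<n2. p2 k \<ge> 0" "\<forall>k<n2. density {0..<a} (A2 k) \<and> density {0..<b} (B2 k)"
    "\<forall>u\<in>grid a b. \<forall>v\<in>grid a b.
           N u v = (\<Sum>k<n2. of_real (p2 k) * A2 k (fst u) (fst v) * B2 k (snd u) (snd v))"
    using assms(2) unfolding sepc_def by blast
  define p where "p k = (if k < n1 then p1 k else p2 (k - n1))" for k
  define A where "A k = (if k < n1 then A1 k else A2 (k - n1))" for k
  define B where "B k = (if k < n1 then B1 k else B2 (k - n1))" for k
  have s: "(\<Sum>k<n1+n2. f k) = (\<Sum>k<n1. f k) + (\<Sum>k<n2. f (n1 + k))" for f :: "nat \<Rightarrow> complex"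
    by (induct n2) (simp_all add: add.assoc)
  show ?thesis unfolding sepc_def
  proof (rule exI[of _ "n1+n2"], rule exI[of _ p], rule exI[of _ A], rule exI[of _ B], intro conjI)
    show "\<forall>k<n1 + n2. 0 \<le> p k"
    proof (intro allI impI)
      fix k assume "k < n1 + n2"
      then show "0 \<le> p k" using 1(1) 2(1)[rule_format, of "k - n1"]
        by (cases "k < n1") (simp_all add: p_def)
    qed
    show "\<forall>k<n1 + n2. density {0..<a} (A k) \<and> density {0..<b} (B k)"
      using 1(2) 2(2) by (auto simp: A_def B_def)
    show "\<forall>u\<in>grid a b. \<forall>v\<in>grid a b. M u v + N u v =
      (\<Sum>k<n1 + n2. complex_of_real (p k) * A k (fst u) (fst v) * B k (snd u) (snd v))"
    proof (intro ballI)
      fix u v assume uv: "u \<in> grid a b" "v \<in> grid a b"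
      have "(\<Sum>k<n1 + n2. complex_of_real (p k) * A k (fst u) (fst v) * B k (snd u) (snd v))
        = (\<Sum>k<n1. complex_of_real (p k) * A k (fst u) (fst v) * B k (snd u) (snd v))
        + (\<Sum>k<n2. complex_of_real (p (n1+k)) * A (n1+k) (fst u) (fst v) * B (n1+k) (snd u) (snd v))"
        by (rule s)
      also have "\<dots> = M u v + N u v"
        using 1(3) 2(3) uv by (simp add: p_def A_def B_def)
      finally show "M u v + N u v =
      (\<Sum>k<n1 + n2. complex_of_real (p k) * A k (fst u) (fst v) * B k (snd u) (snd v))" by simp
    qed
  qed
qed

lemma sepc_scale:
  assumes "c \<ge> 0" "sepc a b M"
  shows "sepc a b (\<lambda>u v. of_real c * M u v)"
proof -
  obtain n and p :: "nat \<Rightarrow> real" and A B where 1: "\<forall>k<n. p k \<ge> 0" "\<forall>k<n. density {0..<a} (A k) \<and> density {0..<b} (B k)"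
    "\<forall>u\<in>grid a b. \<forall>v\<in>grid a b.
           M u v = (\<Sum>k<n. of_real (p k) * A k (fst u) (fst v) * B k (snd u) (snd v))"
    using assms(2) unfolding sepc_def by blast
  show ?thesis unfolding sepc_def
  proof (rule exI[of _ n], rule exI[of _ "\<lambda>k. c * p k"], rule exI[of _ A], rule exI[of _ B], intro conjI)
    show "\<forall>k<n. 0 \<le> c * p k" using 1(1) assms(1) by simp
    show "\<forall>k<n. density {0..<a} (A k) \<and> density {0..<b} (B k)" using 1(2) by simp
    show "\<forall>u\<in>grid a b. \<forall>v\<in>grid a b. complex_of_real c * M u v =
       (\<Sum>k<n. complex_of_real (c * p k) * A k (fst u) (fst v) * B k (snd u) (snd v))"
      using 1(3) by (simp add: sum_distrib_left mult.assoc)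
  qed
qed

lemma sepc_sum:
  assumes "finite S" "\<forall>s\<in>S. sepc a b (M s)"
  shows "sepc a b (\<lambda>u v. \<Sum>s\<in>S. M s u v)"
  using assms
proof (induction S rule: finite_induct)
  case empty
  then show ?case by (intro sepc_zero) simp
next
  case (insert x F)
  then have "sepc a b (\<lambda>u v. M x u v + (\<Sum>s\<in>F. M s u v))"
    by (intro sepc_add) auto
  then show ?case using insert by simp
qed

lemma mcnj: "z * cnj z = (complex_of_real (cmod z))^2"
  by (metis complex_norm_square of_real_power)

lemma density_rank1:
  fixes x :: "'i \<Rightarrow> complex"
  assumes "finite I" and s: "s = (\<Sum>i\<in>I. (cmod (x i))\<^sup>2)" "s > 0"
  shows "density I (\<lambda>i j. x i * cnj (x j) / of_real s)"
  unfolding density_def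
proof (intro conjI allI ballI)
  fix i j show "x i * cnj (x j) / complex_of_real s = cnj (x j * cnj (x i) / complex_of_real s)"
    by simp
next
  fix w :: "'i \<Rightarrow> complex"
  define z where "z = (\<Sum>i\<in>I. cnj (w i) * x i)"
  have "(\<Sum>i\<in>I. \<Sum>j\<in>I. cnj (w i) * (x i * cnj (x j) / complex_of_real s) * w j)
     = z * cnj z / of_real s"
    unfolding z_def by (simp add: sum_distrib_left sum_distrib_right sum_divide_distrib mult.commute mult.left_commute)
  also have "\<dots> = of_real ((cmod z)\<^sup>2 / s)"
    by (metis complex_norm_square of_real_divide)
  finally have e: "(\<Sum>i\<in>I. \<Sum>j\<in>I. cnj (w i) * (x i * cnj (x j) / complex_of_real s) * w j) = of_real ((cmod z)\<^sup>2 / s)" .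
  show "Im (\<Sum>i\<in>I. \<Sum>j\<in>I. cnj (w i) * (x i * cnj (x j) / complex_of_real s) * w j) = 0"
    unfolding e by simp
  show "0 \<le> Re (\<Sum>i\<in>I. \<Sum>j\<in>I. cnj (w i) * (x i * cnj (x j) / complex_of_real s) * w j)"
    unfolding e using assms(3) by simp
next
  have "(\<Sum>i\<in>I. x i * cnj (x i)) = of_real s"
    by (simp add: s(1) mcnj)
  then have "(\<Sum>i\<in>I. x i * cnj (x i) / complex_of_real s) = of_real s / of_real s"
    by (simp add: sum_divide_distrib[symmetric])
  also have "\<dots> = 1" using assms(3) by simp
  finally show "(\<Sum>i\<in>I. x i * cnj (x i) / complex_of_real s) = 1" .
qed

lemma sepc_rank1:
  fixes x y :: "nat \<Rightarrow> complex"
  shows "sepc a b (\<lambda>u v. x (fst u) * cnj (x (fst v)) * (y (snd u) * cnj (y (snd v))))"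
proof (cases "(\<Sum>i\<in>{0..<a}. (cmod (x i))\<^sup>2) > 0 \<and> (\<Sum>i\<in>{0..<b}. (cmod (y i))\<^sup>2) > 0")
  case True
  define sx where "sx = (\<Sum>i\<in>{0..<a}. (cmod (x i))\<^sup>2)"
  define sy where "sy = (\<Sum>i\<in>{0..<b}. (cmod (y i))\<^sup>2)"
  have sx: "sx > 0" and sy: "sy > 0" using True sx_def sy_def by auto
  show ?thesis unfolding sepc_def
  proof (rule exI[of _ "Suc 0"], rule exI[of _ "\<lambda>k. sx * sy"], rule exI[of _ "\<lambda>k i j. x i * cnj (x j) / of_real sx"],
      rule exI[of _ "\<lambda>k i j. y i * cnj (y j) / of_real sy"], intro conjI)
    show "\<forall>k<Suc 0. 0 \<le> sx * sy" using sx sy by simp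
    show "\<forall>k<Suc 0. density {0..<a} (\<lambda>i j. x i * cnj (x j) / complex_of_real sx) \<and>
        density {0..<b} (\<lambda>i j. y i * cnj (y j) / complex_of_real sy)"
      using density_rank1[OF _ sx_def sx] density_rank1[OF _ sy_def sy] by simp
    show "\<forall>u\<in>grid a b. \<forall>v\<in>grid a b.
       x (fst u) * cnj (x (fst v)) * (y (snd u) * cnj (y (snd v))) =
       (\<Sum>k<Suc 0. complex_of_real (sx * sy) * (x (fst u) * cnj (x (fst v)) / complex_of_real sx) *
               (y (snd u) * cnj (y (snd v)) / complex_of_real sy))"
      using sx sy by simp
  qed
next
  case False
  then have "(\<forall>i\<in>{0..<a}. x i = 0) \<or> (\<forall>i\<in>{0..<b}. y i = 0)"
  proof -
    have h: "(\<Sum>i\<in>{0..<n}. (cmod (z i))\<^sup>2) > 0 \<or> (\<forall>i\<in>{0..<n}. z i = 0)" for n and z :: "nat \<Rightarrow> complex"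
    proof (cases "\<forall>i\<in>{0..<n}. z i = 0")
      case False
      then obtain i where "i \<in> {0..<n}" "z i \<noteq> 0" by blast
      then have "(\<Sum>i\<in>{0..<n}. (cmod (z i))\<^sup>2) > 0"
        by (intro sum_pos2[of _ i]) auto
      then show ?thesis by simp
    qed simp
    show ?thesis using False h[where n=a and z=x] h[where n=b and z=y] by auto
  qed
  then show ?thesis by (intro sepc_zero) (auto simp: grid_def)
qed

lemma sum_grid: "(\<Sum>u\<in>grid a b. f u) = (\<Sum>i<a. \<Sum>j<b. f (i, j))"
  unfolding grid_def by (simp add: sum.cartesian_product atLeast0LessThan)

lemma sepc_separable:
  assumes "sepc a b M" "(\<Sum>u\<in>grid a b. M u u) = 1"
  shows "separable a b M"
proof -
  obtain n and p :: "nat \<Rightarrow> real" and A B where 1: "\<forall>k<n. p k \<ge> 0" "\<forall>k<n. density {0..<a} (A k) \<and> density {0..<b} (B k)"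
    "\<forall>u\<in>grid a b. \<forall>v\<in>grid a b.
           M u v = (\<Sum>k<n. of_real (p k) * A k (fst u) (fst v) * B k (snd u) (snd v))"
    using assms(1) unfolding sepc_def by blast
  have trA: "(\<Sum>i<a. A k i i) = 1" if "k < n" for k
  proof -
    have "density {0..<a} (A k)" using 1(2) that by blast
    then have "(\<Sum>x\<in>{0..<a}. A k x x) = 1" unfolding density_def by blast
    then show ?thesis by (simp only: atLeast0LessThan)
  qed
  have trB: "(\<Sum>i<b. B k i i) = 1" if "k < n" for k
  proof -
    have "density {0..<b} (B k)" using 1(2) that by blast
    then have "(\<Sum>x\<in>{0..<b}. B k x x) = 1" unfolding density_def by blast
    then show ?thesis by (simp only: atLeast0LessThan)
  qed
  have "1 = (\<Sum>u\<in>grid a b. M u u)" using assms(2) by simp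
  also have "\<dots> = (\<Sum>u\<in>grid a b. \<Sum>k<n. of_real (p k) * A k (fst u) (fst u) * B k (snd u) (snd u))"
    using 1(3) by (intro sum.cong) auto
  also have "\<dots> = (\<Sum>k<n. \<Sum>u\<in>grid a b. of_real (p k) * A k (fst u) (fst u) * B k (snd u) (snd u))"
    by (rule sum.swap)
  also have "\<dots> = (\<Sum>k<n. of_real (p k) * (\<Sum>i<a. A k i i) * (\<Sum>j<b. B k j j))"
  proof (rule sum.cong[OF refl])
    fix k
    have sp: "(\<Sum>i<a. A k i i) * (\<Sum>j<b. B k j j) = (\<Sum>i<a. \<Sum>j<b. A k i i * B k j j)"
      by (rule sum_product)
    have "of_real (p k) * (\<Sum>i<a. A k i i) * (\<Sum>j<b. B k j j) = of_real (p k) * ((\<Sum>i<a. A k i i) * (\<Sum>j<b. B k j j))"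
      by (simp only: mult.assoc)
    also have "\<dots> = (\<Sum>i<a. \<Sum>j<b. of_real (p k) * (A k i i * B k j j))"
      unfolding sp by (simp add: sum_distrib_left)
    finally have "of_real (p k) * (\<Sum>i<a. A k i i) * (\<Sum>j<b. B k j j) = (\<Sum>i<a. \<Sum>j<b. of_real (p k) * (A k i i * B k j j))" .
    moreover have "(\<Sum>u\<in>grid a b. complex_of_real (p k) * A k (fst u) (fst u) * B k (snd u) (snd u))
       = (\<Sum>i<a. \<Sum>j<b. of_real (p k) * (A k i i * B k j j))"
      by (simp only: sum_grid fst_conv snd_conv mult.assoc)
    ultimately show "(\<Sum>u\<in>grid a b. complex_of_real (p k) * A k (fst u) (fst u) * B k (snd u) (snd u)) =
         complex_of_real (p k) * (\<Sum>i<a. A k i i) * (\<Sum>j<b. B k j j)"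
      by simp
  qed
  also have "\<dots> = (\<Sum>k<n. of_real (p k))" using trA trB by simp
  finally have "of_real (\<Sum>k<n. p k) = (1::complex)"
    by (simp add: of_real_sum)
  then have "(\<Sum>k<n. p k) = 1" by (simp only: of_real_eq_1_iff)
  then show ?thesis unfolding separable_def using 1 by blast
qed

lemma cis_eq_1_int: "cis x = 1 \<Longrightarrow> \<exists>n::int. x = of_int n * 2 * pi"
proof -
  assume "cis x = 1"
  then have "cos x = 1" by (metis Re_complex_of_real cis.sel(1) complex_of_real_def one_complex.sel(1))
  then show ?thesis using cos_one_2pi_int by auto
qed

lemma root_sum:
  fixes z :: int
  assumes "k > 0"
  shows "(\<Sum>m<k. cis (2 * pi * real m * of_int z / real k)) = (if int k dvd z then of_nat k else 0)"
proof -
  define r where "r = cis (2 * pi * of_int z / real k)"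
  have e: "cis (2 * pi * real m * of_int z / real k) = r ^ m" for m
    unfolding r_def DeMoivre by (simp add: mult_ac)
  show ?thesis
  proof (cases "int k dvd z")
    case True
    then obtain c where c: "z = int k * c" by blast
    have "2 * pi * real_of_int z / real k = 2 * pi * real_of_int c" unfolding c using assms by simp
    moreover have "cis (2 * pi * real_of_int c) = 1" by (rule cis_multiple_2pi) simp
    ultimately have "r = 1" unfolding r_def by simp
    then show ?thesis using True by (simp add: e)
  next
    case False
    have "r \<noteq> 1"
    proof
      assume "r = 1"
      then obtain n :: int where n: "2 * pi * of_int z / real k = of_int n * 2 * pi"
        unfolding r_def using cis_eq_1_int by blast
      then have "of_int z = of_int n * real k" using assms by (simp add: field_simps)
      then have "real_of_int z = real_of_int (n * int k)" by simp
      then have "z = n * int k" by (simp only: of_int_eq_iff)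
      then show False using False by simp
    qed
    moreover have "r ^ k = 1"
    proof -
      have "real k * (2 * pi * of_int z / real k) = 2 * pi * real_of_int z" using assms by simp
      moreover have "cis (2 * pi * real_of_int z) = 1" by (rule cis_multiple_2pi) simp
      ultimately show ?thesis unfolding r_def DeMoivre by simp
    qed
    ultimately show ?thesis using False by (simp add: e geometric_sum)
  qed
qed

lemma dvd_small: "\<bar>z\<bar> < int k \<Longrightarrow> (int k dvd z \<longleftrightarrow> z = 0)"
proof
  assume h: "\<bar>z\<bar> < int k" "int k dvd z"
  show "z = 0"
  proof (rule ccontr)
    assume "z \<noteq> 0"
    then have "\<bar>int k\<bar> \<le> \<bar>z\<bar>" using h(2) by (rule dvd_imp_le_int)
    then show False using h(1) by simp
  qed
qed simp

lemma dvd_diff0: "i < k \<Longrightarrow> i' < k \<Longrightarrow> (int k dvd (int i - int i' + 0)) \<longleftrightarrow> i = i'"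
  by (subst dvd_small) auto

lemma dvd_diff1: "i < k \<Longrightarrow> i' < k \<Longrightarrow>
   (int k dvd (int i - int i' + 1)) \<longleftrightarrow> i' = (if Suc i = k then 0 else Suc i)"
proof (cases "Suc i = k \<and> i' = 0")
  case True
  then have e: "int i - int i' + 1 = int k" by auto
  show ?thesis unfolding e using True by simp
next
  case False
  assume "i < k" "i' < k"
  then have "\<bar>int i - int i' + 1\<bar> < int k" using False by auto
  then show ?thesis using False \<open>i < k\<close> \<open>i' < k\<close> by (subst dvd_small) auto
qed

lemma dvd_diffm1: "i < k \<Longrightarrow> i' < k \<Longrightarrow>
   (int k dvd (int i - int i' + (-1))) \<longleftrightarrow> i = (if Suc i' = k then 0 else Suc i')"
proof -
  assume "i < k" "i' < k"
  have "int k dvd (int i - int i' + (-1)) \<longleftrightarrow> int k dvd (int i' - int i + 1)"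
  proof -
    have "int i - int i' + (-1) = - (int i' - int i + 1)" by simp
    then show ?thesis by (simp only: dvd_minus_iff)
  qed
  then show ?thesis using dvd_diff1[OF \<open>i' < k\<close> \<open>i < k\<close>] by simp
qed

lemma sum_shift_cyc:
  fixes g :: "nat \<Rightarrow> 'a::comm_ring"
  assumes "g k = g 0"
  shows "(\<Sum>i<k. g (Suc i)) = (\<Sum>i<k. g i)"
proof -
  have "(\<Sum>i<Suc k. g i) = g 0 + (\<Sum>i<k. g (Suc i))" by (rule sum.lessThan_Suc_shift)
  moreover have "(\<Sum>i<Suc k. g i) = (\<Sum>i<k. g i) + g k" by simp
  ultimately show ?thesis using assms by (simp add: add.commute)
qed

definition ev :: "vertex \<Rightarrow> vertex \<Rightarrow> complex" where "ev w x = (if x = w then 1 else 0)"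
definition Lp :: "vertex \<Rightarrow> vertex \<Rightarrow> gmatrix" where
  "Lp w1 w2 u v = (ev w1 u - ev w2 u) * (ev w1 v - ev w2 v)"

lemma collapse:
  fixes k j :: nat
  assumes "j < k" "\<forall>i'<k. P i' \<longleftrightarrow> i' = j"
  shows "(\<Sum>i'<k. if Q i' \<and> P i' then c else 0) = (if Q j then c else 0)"
proof -
  have "(\<Sum>i'<k. if Q i' \<and> P i' then c else 0) = (\<Sum>i'<k. if i' = j then (if Q i' then c else 0) else 0)"
    using assms(2) by (intro sum.cong) auto
  also have "\<dots> = (if Q j then c else 0)" 
  proof -
    have "(\<Sum>i'<k. if i' = j then (\<lambda>i'. if Q i' then c else 0) i' else 0) = (if j \<in> {..<k} then (\<lambda>i'. if Q i' then c else 0) j else 0)"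
      by (rule sum.delta) simp
    then show ?thesis using assms(1) by simp
  qed
  finally show ?thesis .
qed

lemma cis_term:
  "(if h i = p then cis (2*pi*real m*real i/real k) else 0) * cnj (if h i' = q then cis (2*pi*real m*real i'/real k) else 0)
   = (if h i = p \<and> h i' = q then cis (2*pi*real m*(real i - real i')/real k) else 0)"
  by (simp add: cis_cnj cis_mult diff_divide_distrib right_diff_distrib)

lemma beta_prod:
  fixes h :: "nat \<Rightarrow> nat" and d :: int
  assumes "k > 0"
  shows "(\<Sum>m<k. cis (2*pi*real m*of_int d/real k) *
      ((\<Sum>i<k. if h i = p then cis (2*pi*real m*real i/real k) else 0) *
       cnj (\<Sum>i<k. if h i = q then cis (2*pi*real m*real i/real k) else 0)))
   = (\<Sum>i<k. \<Sum>i'<k. if h i = p \<and> h i' = q \<and> int k dvd (int i - int i' + d) then of_nat k else 0)"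
proof -
  have 1: "(\<Sum>i<k. if h i = p then cis (2*pi*real m*real i/real k) else 0) *
       cnj (\<Sum>i<k. if h i = q then cis (2*pi*real m*real i/real k) else 0)
     = (\<Sum>i<k. \<Sum>i'<k. if h i = p \<and> h i' = q then cis (2*pi*real m*(real i - real i')/real k) else 0)" for m
    by (simp only: cnj_sum sum_product cis_term)
  have 2: "cis (2*pi*real m*of_int d/real k) * (if h i = p \<and> h i' = q then cis (2*pi*real m*(real i - real i')/real k) else 0)
     = (if h i = p \<and> h i' = q then cis (2*pi*real m*of_int (int i - int i' + d)/real k) else 0)" for m i i'
  proof -
    have "2*pi*real m*of_int d/real k + 2*pi*real m*(real i - real i')/real k = 2*pi*real m*of_int (int i - int i' + d)/real k"
      using assms by (simp add: field_simps)
    then show ?thesis by (simp add: cis_mult)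
  qed
  have "(\<Sum>m<k. cis (2*pi*real m*of_int d/real k) *
      ((\<Sum>i<k. if h i = p then cis (2*pi*real m*real i/real k) else 0) *
       cnj (\<Sum>i<k. if h i = q then cis (2*pi*real m*real i/real k) else 0)))
     = (\<Sum>m<k. \<Sum>i<k. \<Sum>i'<k. if h i = p \<and> h i' = q then cis (2*pi*real m*of_int (int i - int i' + d)/real k) else 0)"
    by (simp only: 1 sum_distrib_left 2)
  also have "\<dots> = (\<Sum>i<k. \<Sum>i'<k. \<Sum>m<k. if h i = p \<and> h i' = q then cis (2*pi*real m*of_int (int i - int i' + d)/real k) else 0)"
    by (subst sum.swap, rule sum.cong[OF refl], rule sum.swap)
  also have "\<dots> = (\<Sum>i<k. \<Sum>i'<k. if h i = p \<and> h i' = q \<and> int k dvd (int i - int i' + d) then of_nat k else 0)"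
  proof -
    have r: "(\<Sum>m<k. if C then cis (2*pi*real m*of_int z/real k) else 0) = (if C \<and> int k dvd z then of_nat k else 0)" for C z
      using root_sum[OF assms, of z] by (cases C) auto
    show ?thesis by (intro sum.cong refl) (simp only: r conj_assoc)
  qed
  finally show ?thesis .
qed

lemma succ_h: "h k = h 0 \<Longrightarrow> h (if Suc i = k then 0 else Suc i) = h (Suc i)"
  by auto

lemma eval0:
  fixes h :: "nat \<Rightarrow> nat"
  shows "(\<Sum>i<k. \<Sum>i'<k. if h i = p \<and> h i' = q \<and> int k dvd (int i - int i' + 0) then (of_nat k::complex) else 0)
       = of_nat k * (\<Sum>i<k. if h i = p \<and> h i = q then 1 else 0)"
proof -
  have inner: "(\<Sum>i'<k. if h i = p \<and> h i' = q \<and> int k dvd (int i - int i' + 0) then (of_nat k::complex) else 0)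
      = (if h i = p \<and> h i = q then of_nat k else 0)" if "i < k" for i
    using collapse[of i k "\<lambda>i'. int k dvd (int i - int i' + 0)" "\<lambda>i'. h i = p \<and> h i' = q" "of_nat k::complex"]
      dvd_diff0[OF that] that by (simp only: conj_assoc) blast
  have "(\<Sum>i<k. \<Sum>i'<k. if h i = p \<and> h i' = q \<and> int k dvd (int i - int i' + 0) then (of_nat k::complex) else 0) = (\<Sum>i<k. if h i = p \<and> h i = q then (of_nat k::complex) else 0)" by (rule sum.cong[OF refl], rule inner) simp
  note e = this
  show ?thesis unfolding e by (simp add: sum_distrib_left) (intro sum.cong refl, simp)
qed

lemma eval1:
  fixes h :: "nat \<Rightarrow> nat"
  assumes "h k = h 0"
  shows "(\<Sum>i<k. \<Sum>i'<k. if h i = p \<and> h i' = q \<and> int k dvd (int i - int i' + 1) then (of_nat k::complex) else 0)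
       = of_nat k * (\<Sum>i<k. if h i = p \<and> h (Suc i) = q then 1 else 0)"
proof -
  have inner: "(\<Sum>i'<k. if h i = p \<and> h i' = q \<and> int k dvd (int i - int i' + 1) then (of_nat k::complex) else 0)
      = (if h i = p \<and> h (Suc i) = q then of_nat k else 0)" if "i < k" for i
  proof -
    have "(\<Sum>i'<k. if h i = p \<and> h i' = q \<and> int k dvd (int i - int i' + 1) then (of_nat k::complex) else 0)
      = (if h i = p \<and> h (if Suc i = k then 0 else Suc i) = q then of_nat k else 0)"
      using collapse[of "if Suc i = k then 0 else Suc i" k "\<lambda>i'. int k dvd (int i - int i' + 1)" "\<lambda>i'. h i = p \<and> h i' = q" "of_nat k::complex"]
        dvd_diff1[OF that] that by (simp only: conj_assoc) (auto split: if_splits)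
    then show ?thesis using succ_h[of h k i, OF assms] by simp
  qed
  have "(\<Sum>i<k. \<Sum>i'<k. if h i = p \<and> h i' = q \<and> int k dvd (int i - int i' + 1) then (of_nat k::complex) else 0) = (\<Sum>i<k. if h i = p \<and> h (Suc i) = q then (of_nat k::complex) else 0)" by (rule sum.cong[OF refl], rule inner) simp
  note e = this
  show ?thesis unfolding e by (simp add: sum_distrib_left) (intro sum.cong refl, simp)
qed

lemma evalm1:
  fixes h :: "nat \<Rightarrow> nat"
  assumes "h k = h 0"
  shows "(\<Sum>i<k. \<Sum>i'<k. if h i = p \<and> h i' = q \<and> int k dvd (int i - int i' + (-1)) then (of_nat k::complex) else 0)
       = of_nat k * (\<Sum>i'<k. if h (Suc i') = p \<and> h i' = q then 1 else 0)"
proof -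
  have inner: "(\<Sum>i<k. if h i = p \<and> h i' = q \<and> int k dvd (int i - int i' + (-1)) then (of_nat k::complex) else 0)
      = (if h (Suc i') = p \<and> h i' = q then of_nat k else 0)" if "i' < k" for i'
  proof -
    have "(\<Sum>i<k. if h i = p \<and> h i' = q \<and> int k dvd (int i - int i' + (-1)) then (of_nat k::complex) else 0)
      = (if h (if Suc i' = k then 0 else Suc i') = p \<and> h i' = q then of_nat k else 0)"
      using collapse[of "if Suc i' = k then 0 else Suc i'" k "\<lambda>i. int k dvd (int i - int i' + (-1))" "\<lambda>i. h i = p \<and> h i' = q" "of_nat k::complex"]
        dvd_diffm1[OF _ that] that by (simp only: conj_assoc) (auto split: if_splits)
    then show ?thesis using succ_h[of h k i', OF assms] by simp
  qed
  have "(\<Sum>i<k. \<Sum>i'<k. if h i = p \<and> h i' = q \<and> int k dvd (int i - int i' + (-1)) then (of_nat k::complex) else 0)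
    = (\<Sum>i'<k. \<Sum>i<k. if h i = p \<and> h i' = q \<and> int k dvd (int i - int i' + (-1)) then (of_nat k::complex) else 0)"
    by (rule sum.swap)
  note sw = this
  have "(\<Sum>i'<k. \<Sum>i<k. if h i = p \<and> h i' = q \<and> int k dvd (int i - int i' + (-1)) then (of_nat k::complex) else 0) = (\<Sum>i'<k. if h (Suc i') = p \<and> h i' = q then (of_nat k::complex) else 0)" by (rule sum.cong[OF refl], rule inner) simp
  note e = this
  show ?thesis unfolding sw e by (simp add: sum_distrib_left) (intro sum.cong refl, simp)
qed

lemma fourier:
  fixes h :: "nat \<Rightarrow> nat"
  assumes k: "k > 0" and hk: "h k = h 0"
  shows "sepc 2 b (\<lambda>u v. \<Sum>i<k. Lp (0, h i) (1, h (Suc i)) u v)"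
proof -
  define \<alpha> where "\<alpha> m a = (if a = (0::nat) then 1 else - cis (-(2*pi*real m/real k)))" for m a
  define \<beta> where "\<beta> m p = (\<Sum>i<k. if h i = p then cis (2*pi*real m*real i/real k) else 0)" for m p
  have cone: "sepc 2 b (\<lambda>u v. \<Sum>m<k. of_real (1/real k) * (\<alpha> m (fst u) * cnj (\<alpha> m (fst v)) * (\<beta> m (snd u) * cnj (\<beta> m (snd v)))))"
    by (rule sepc_sum, simp, intro ballI sepc_scale[OF _ sepc_rank1], simp)
  have G: "(\<Sum>m<k. cis (2*pi*real m*of_int d/real k) * (\<beta> m p * cnj (\<beta> m q)))
      = (\<Sum>i<k. \<Sum>i'<k. if h i = p \<and> h i' = q \<and> int k dvd (int i - int i' + d) then of_nat k else 0)" for d p q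
    unfolding \<beta>_def by (rule beta_prod[OF k])
  have c00: "\<alpha> m 0 * cnj (\<alpha> m 0) = cis (2*pi*real m*of_int 0/real k)" for m by (simp add: \<alpha>_def)
  have c11: "\<alpha> m 1 * cnj (\<alpha> m 1) = cis (2*pi*real m*of_int 0/real k)" for m
    by (simp add: \<alpha>_def cis_cnj cis_mult)
  have c01: "\<alpha> m 0 * cnj (\<alpha> m 1) = - cis (2*pi*real m*of_int 1/real k)" for m
    by (simp add: \<alpha>_def cis_cnj)
  have c10: "\<alpha> m 1 * cnj (\<alpha> m 0) = - cis (2*pi*real m*of_int (-1)/real k)" for m
    by (simp add: \<alpha>_def)
  have kk: "complex_of_real (1 / real k) * of_nat k = 1" using k by simp
  show ?thesis
  proof (rule sepc_cong[OF cone], intro ballI)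
    fix u v assume "u \<in> grid 2 b" "v \<in> grid 2 b"
    then obtain a p a' q where u: "u = (a,p)" and v: "v = (a',q)" and a2: "a < 2" and a2': "a' < 2"
      by (auto simp: grid_def)
    have a: "a = 0 \<or> a = 1" and a': "a' = 0 \<or> a' = 1" using a2 a2' by arith+
    have lhs: "(\<Sum>i<k. Lp (0, h i) (1, h (Suc i)) (a,p) (a',q)) = (\<Sum>i<k. ((if a = 0 \<and> h i = p then 1 else 0) - (if a = 1 \<and> h (Suc i) = p then 1 else 0))
        * ((if a' = 0 \<and> h i = q then 1 else 0) - (if a' = 1 \<and> h (Suc i) = q then 1 else 0)))"
      unfolding Lp_def ev_def by (intro sum.cong refl) auto
    have "(\<Sum>m<k. of_real (1/real k) * (\<alpha> m a * cnj (\<alpha> m a') * (\<beta> m p * cnj (\<beta> m q))))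
       = (\<Sum>i<k. Lp (0, h i) (1, h (Suc i)) (a,p) (a',q))"
    proof -
      consider "a = 0" "a' = 0" | "a = 1" "a' = 1" | "a = 0" "a' = 1" | "a = 1" "a' = 0" using a a' by blast
      then show ?thesis
      proof cases
        case 1
        have "(\<Sum>m<k. of_real (1/real k) * (\<alpha> m a * cnj (\<alpha> m a') * (\<beta> m p * cnj (\<beta> m q))))
          = of_real (1/real k) * (\<Sum>m<k. cis (2*pi*real m*of_int 0/real k) * (\<beta> m p * cnj (\<beta> m q)))"
          unfolding 1 by (simp only: c00 sum_distrib_left)
        also have "\<dots> = (\<Sum>i<k. if h i = p \<and> h i = q then 1 else 0)"
          by (subst G, subst eval0, unfold mult.assoc[symmetric] kk, simp)
        also have "\<dots> = (\<Sum>i<k. Lp (0, h i) (1, h (Suc i)) (a,p) (a',q))"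
          unfolding lhs unfolding 1 by (intro sum.cong refl) auto
        finally show ?thesis .
      next
        case 2
        have "(\<Sum>m<k. of_real (1/real k) * (\<alpha> m a * cnj (\<alpha> m a') * (\<beta> m p * cnj (\<beta> m q))))
          = of_real (1/real k) * (\<Sum>m<k. cis (2*pi*real m*of_int 0/real k) * (\<beta> m p * cnj (\<beta> m q)))"
          unfolding 2 by (simp only: c11 sum_distrib_left)
        also have "\<dots> = (\<Sum>i<k. if h i = p \<and> h i = q then 1 else 0)"
          by (subst G, subst eval0, unfold mult.assoc[symmetric] kk, simp)
        also have "\<dots> = (\<Sum>i<k. if h (Suc i) = p \<and> h (Suc i) = q then 1 else 0)"
          by (rule sum_shift_cyc[symmetric]) (simp add: hk)
        also have "\<dots> = (\<Sum>i<k. Lp (0, h i) (1, h (Suc i)) (a,p) (a',q))"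
          unfolding lhs unfolding 2 by (intro sum.cong refl) auto
        finally show ?thesis .
      next
        case 3
        have "(\<Sum>m<k. of_real (1/real k) * (\<alpha> m a * cnj (\<alpha> m a') * (\<beta> m p * cnj (\<beta> m q))))
          = - (of_real (1/real k) * (\<Sum>m<k. cis (2*pi*real m*of_int 1/real k) * (\<beta> m p * cnj (\<beta> m q))))"
          unfolding 3 by (simp only: c01 sum_distrib_left sum_negf mult_minus_left mult_minus_right)
        also have "\<dots> = - (\<Sum>i<k. if h i = p \<and> h (Suc i) = q then 1 else 0)"
          by (subst G, subst eval1[OF hk], unfold mult.assoc[symmetric] kk, simp)
        also have "\<dots> = (\<Sum>i<k. Lp (0, h i) (1, h (Suc i)) (a,p) (a',q))"
          unfolding lhs unfolding 3 sum_negf[symmetric] by (intro sum.cong refl) auto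
        finally show ?thesis .
      next
        case 4
        have "(\<Sum>m<k. of_real (1/real k) * (\<alpha> m a * cnj (\<alpha> m a') * (\<beta> m p * cnj (\<beta> m q))))
          = - (of_real (1/real k) * (\<Sum>m<k. cis (2*pi*real m*of_int (-1)/real k) * (\<beta> m p * cnj (\<beta> m q))))"
          unfolding 4 by (simp only: c10 sum_distrib_left sum_negf mult_minus_left mult_minus_right)
        also have "\<dots> = - (\<Sum>i<k. if h (Suc i) = p \<and> h i = q then 1 else 0)"
          by (subst G, subst evalm1[OF hk], unfold mult.assoc[symmetric] kk, simp)
        also have "\<dots> = (\<Sum>i<k. Lp (0, h i) (1, h (Suc i)) (a,p) (a',q))"
          unfolding lhs unfolding 4 sum_negf[symmetric] by (intro sum.cong refl) auto
        finally show ?thesis .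
      qed
    qed
    then show "(\<Sum>m<k. of_real (1/real k) * (\<alpha> m (fst u) * cnj (\<alpha> m (fst v)) * (\<beta> m (snd u) * cnj (\<beta> m (snd v)))))
       = (\<Sum>i<k. Lp (0, h i) (1, h (Suc i)) u v)" unfolding u v by simp
  qed
qed

definition bal :: "(nat \<times> nat) set \<Rightarrow> bool" where
  "bal F \<longleftrightarrow> (\<forall>j. (\<Sum>p\<in>F. if fst p = j then 1 else 0::nat) = (\<Sum>p\<in>F. if snd p = j then 1 else 0))"

lemma sum_shift_cyc':
  fixes g :: "nat \<Rightarrow> 'a::cancel_comm_monoid_add"
  assumes "g k = g 0"
  shows "(\<Sum>i<k. g (Suc i)) = (\<Sum>i<k. g i)"
proof -
  have "(\<Sum>i<Suc k. g i) = g 0 + (\<Sum>i<k. g (Suc i))" by (rule sum.lessThan_Suc_shift)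
  moreover have "(\<Sum>i<Suc k. g i) = (\<Sum>i<k. g i) + g k" by simp
  ultimately show ?thesis using assms by (metis add.commute add_left_cancel)
qed

lemma ind_pos: "finite F \<Longrightarrow> (\<Sum>p\<in>F. if P p then 1 else 0::nat) \<noteq> 0 \<longleftrightarrow> (\<exists>p\<in>F. P p)"
  by simp

lemma find_cycle:
  assumes fin: "finite F" and sub: "F \<subseteq> {..<b} \<times> {..<b}" and bl: "bal F" and ne: "F \<noteq> {}"
  shows "\<exists>k g. k > 0 \<and> g k = g 0 \<and> inj_on g {..<k} \<and> (\<forall>i<k. (g i, g (Suc i)) \<in> F)"
proof -
  have out: "\<exists>y. (z, y) \<in> F" if "(x, z) \<in> F" for x z
  proof -
    have "(\<Sum>p\<in>F. if snd p = z then 1 else 0::nat) \<noteq> 0" using fin that by (subst ind_pos) force+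
    then have "(\<Sum>p\<in>F. if fst p = z then 1 else 0::nat) \<noteq> 0" using bl unfolding bal_def by metis
    then obtain p where "p \<in> F" "fst p = z" using fin by (subst (asm) ind_pos) auto
    then show ?thesis by (metis prod.collapse)
  qed
  obtain x0 y0 where xy0: "(x0, y0) \<in> F" using ne by auto
  define f where "f = rec_nat x0 (\<lambda>_ z. SOME y. (z, y) \<in> F)"
  have f0: "f 0 = x0" and fS: "f (Suc n) = (SOME y. (f n, y) \<in> F)" for n unfolding f_def by simp_all
  have step: "(f n, f (Suc n)) \<in> F" for n
  proof (induction n)
    case 0
    show ?case unfolding fS f0 using xy0 by (rule someI)
  next
    case (Suc n)
    then obtain y where "(f (Suc n), y) \<in> F" using out by blast
    then show ?case unfolding fS[of "Suc n"] by (rule someI)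
  qed
  have fb: "f n < b" for n using step[of n] sub by auto
  have "\<not> inj_on f {..b}"
  proof
    assume "inj_on f {..b}"
    then have "card {..b} \<le> card {..<b}" by (rule card_inj_on_le) (use fb in auto)
    then show False by simp
  qed
  then obtain s t where st: "s < t" "f s = f t"
    unfolding inj_on_def by (metis linorder_neqE_nat)
  define T where "T = (LEAST t. \<exists>s<t. f s = f t)"
  have "\<exists>s<T. f s = f T" unfolding T_def by (rule LeastI[of _ t]) (use st in auto)
  then obtain s0 where s0: "s0 < T" "f s0 = f T" by blast
  have minT: "\<not> (\<exists>s<t'. f s = f t')" if "t' < T" for t'
    using that unfolding T_def by (rule not_less_Least)
  define k where "k = T - s0"
  define g where "g i = f (s0 + i)" for i
  show ?thesis
  proof (intro exI[of _ k] exI[of _ g] conjI allI impI)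
    show "k > 0" using s0 k_def by simp
    show "g k = g 0" using s0 unfolding g_def k_def by simp
    show "inj_on g {..<k}"
    proof (rule inj_onI)
      fix i j assume ij: "i \<in> {..<k}" "j \<in> {..<k}" "g i = g j"
      show "i = j"
      proof (rule ccontr)
        assume "i \<noteq> j"
        then consider "i < j" | "j < i" by arith
        then show False
        proof cases
          case 1
          have "s0 + j < T" using ij k_def by auto
          moreover have "s0 + i < s0 + j" using 1 by simp
          moreover have "f (s0 + i) = f (s0 + j)" using ij(3) unfolding g_def by simp
          ultimately show False using minT by blast
        next
          case 2
          have "s0 + i < T" using ij k_def by auto
          moreover have "s0 + j < s0 + i" using 2 by simp
          moreover have "f (s0 + j) = f (s0 + i)" using ij(3) unfolding g_def by simp
          ultimately show False using minT by blast
        qed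
      qed
    qed
    fix i assume "i < k"
    show "(g i, g (Suc i)) \<in> F" unfolding g_def using step[of "s0 + i"] by simp
  qed
qed

lemma cycle_decomp:
  assumes "finite F" "F \<subseteq> {..<b} \<times> {..<b}" "bal F"
  shows "sepc 2 b (\<lambda>u v. \<Sum>p\<in>F. Lp (0, fst p) (1, snd p) u v)"
  using assms
proof (induction "card F" arbitrary: F rule: less_induct)
  case less
  show ?case
  proof (cases "F = {}")
    case True
    then show ?thesis by (intro sepc_zero) simp
  next
    case False
    obtain k g where kg: "k > 0" "g k = g 0" "inj_on g {..<k}" "\<forall>i<k. (g i, g (Suc i)) \<in> F"
      using find_cycle[OF less.prems False] by blast
    define e where "e i = (g i, g (Suc i))" for i
    define C where "C = e ` {..<k}"
    have injE: "inj_on e {..<k}" using kg(3) unfolding e_def inj_on_def by auto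
    have CF: "C \<subseteq> F" using kg(4) unfolding C_def e_def by auto
    have finC: "finite C" unfolding C_def by simp
    have sumC: "(\<Sum>p\<in>C. \<phi> p) = (\<Sum>i<k. \<phi> (e i))" for \<phi> :: "nat \<times> nat \<Rightarrow> 'a::comm_monoid_add"
      unfolding C_def by (rule sum.reindex[OF injE, unfolded comp_def])
    have split: "(\<Sum>p\<in>F. \<phi> p) = (\<Sum>p\<in>F - C. \<phi> p) + (\<Sum>p\<in>C. \<phi> p)" for \<phi> :: "nat \<times> nat \<Rightarrow> 'a::comm_monoid_add"
      using sum.subset_diff[OF CF less.prems(1)] .
    have "C \<noteq> {}" using kg(1) unfolding C_def by auto
    then have lt: "card (F - C) < card F"
    proof -
      have "card C > 0" using \<open>C \<noteq> {}\<close> finC by (simp add: card_gt_0_iff)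
      moreover have "card C \<le> card F" using CF less.prems(1) by (rule card_mono[rotated])
      moreover have "card (F - C) = card F - card C" using finC CF by (rule card_Diff_subset)
      ultimately show ?thesis by simp
    qed
    have balC: "(\<Sum>p\<in>C. if fst p = j then 1 else 0::nat) = (\<Sum>p\<in>C. if snd p = j then 1 else 0)" for j
    proof -
      have "(\<Sum>p\<in>C. if snd p = j then 1 else 0::nat) = (\<Sum>i<k. if g (Suc i) = j then 1 else 0)"
        unfolding sumC e_def by simp
      also have "\<dots> = (\<Sum>i<k. if g i = j then 1 else 0)"
        by (rule sum_shift_cyc'[of "\<lambda>i. if g i = j then 1 else (0::nat)"]) (simp add: kg(2))
      also have "\<dots> = (\<Sum>p\<in>C. if fst p = j then 1 else 0::nat)"
        unfolding sumC e_def by simp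
      finally show ?thesis by simp
    qed
    have balR: "bal (F - C)"
      unfolding bal_def
    proof
      fix j
      have "(\<Sum>p\<in>F - C. if fst p = j then 1 else 0::nat) + (\<Sum>p\<in>C. if fst p = j then 1 else 0::nat)
          = (\<Sum>p\<in>F - C. if snd p = j then 1 else 0::nat) + (\<Sum>p\<in>C. if snd p = j then 1 else 0::nat)"
        using less.prems(3) unfolding bal_def split[symmetric] by blast
      then show "(\<Sum>p\<in>F - C. if fst p = j then 1 else 0::nat) = (\<Sum>p\<in>F - C. if snd p = j then 1 else 0::nat)"
        using balC[of j] by simp
    qed
    have IH: "sepc 2 b (\<lambda>u v. \<Sum>p\<in>F - C. Lp (0, fst p) (1, snd p) u v)"
      using less.hyps[OF lt] less.prems balR by auto
    have FC: "sepc 2 b (\<lambda>u v. \<Sum>i<k. Lp (0, g i) (1, g (Suc i)) u v)"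
      by (rule fourier[OF kg(1,2)])
    have "sepc 2 b (\<lambda>u v. (\<Sum>p\<in>F - C. Lp (0, fst p) (1, snd p) u v) + (\<Sum>i<k. Lp (0, g i) (1, g (Suc i)) u v))"
      by (rule sepc_add[OF IH FC])
    then show ?thesis
    proof (rule sepc_cong, intro ballI)
      fix u v
      show "(\<Sum>p\<in>F - C. Lp (0, fst p) (1, snd p) u v) + (\<Sum>i<k. Lp (0, g i) (1, g (Suc i)) u v) =
          (\<Sum>p\<in>F. Lp (0, fst p) (1, snd p) u v)"
        unfolding split[of "\<lambda>p. Lp (0, fst p) (1, snd p) u v"] sumC e_def by simp
    qed
  qed
qed

lemma density_herm: "density I A \<Longrightarrow> x \<in> I \<Longrightarrow> y \<in> I \<Longrightarrow> A x y = cnj (A y x)"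
  unfolding density_def by blast

lemma density_form:
  assumes "density I A"
  shows "Im (\<Sum>x\<in>I. \<Sum>y\<in>I. cnj (w x) * A x y * w y) = 0 \<and> Re (\<Sum>x\<in>I. \<Sum>y\<in>I. cnj (w x) * A x y * w y) \<ge> 0"
  using assms unfolding density_def by blast

lemma density_allsum:
  assumes "density I A"
  shows "(\<Sum>x\<in>I. \<Sum>y\<in>I. A x y) = of_real (Re (\<Sum>x\<in>I. \<Sum>y\<in>I. A x y)) \<and> Re (\<Sum>x\<in>I. \<Sum>y\<in>I. A x y) \<ge> 0"
  using density_form[OF assms, of "\<lambda>_. 1"] by (simp add: complex_eq_iff)

lemma kernel:
  assumes fin: "finite I" and D: "density I A" and z: "(\<Sum>x\<in>I. \<Sum>y\<in>I. A x y) = 0"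
  shows "\<forall>x\<in>I. (\<Sum>y\<in>I. A x y) = 0"
proof -
  define r where "r x = (\<Sum>y\<in>I. A x y)" for x
  define N where "N = (\<Sum>x\<in>I. (cmod (r x))\<^sup>2)"
  define Q where "Q w = (\<Sum>x\<in>I. \<Sum>y\<in>I. cnj (w x) * A x y * w y)" for w
  have col: "(\<Sum>x\<in>I. A x y) = cnj (r y)" if "y \<in> I" for y
    unfolding r_def cnj_sum using density_herm[OF D _ that] by (intro sum.cong) auto
  have S1: "(\<Sum>x\<in>I. \<Sum>y\<in>I. A x y * r y) = of_real N"
  proof -
    have "(\<Sum>x\<in>I. \<Sum>y\<in>I. A x y * r y) = (\<Sum>y\<in>I. \<Sum>x\<in>I. A x y * r y)" by (rule sum.swap)
    also have "\<dots> = (\<Sum>y\<in>I. cnj (r y) * r y)"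
      by (intro sum.cong refl) (simp add: sum_distrib_right[symmetric] col)
    also have "\<dots> = of_real N" unfolding N_def by (simp add: mcnj mult.commute)
    finally show ?thesis .
  qed
  have S2: "(\<Sum>x\<in>I. \<Sum>y\<in>I. cnj (r x) * A x y) = of_real N"
  proof -
    have "(\<Sum>x\<in>I. \<Sum>y\<in>I. cnj (r x) * A x y) = (\<Sum>x\<in>I. cnj (r x) * r x)"
      by (simp add: sum_distrib_left[symmetric] r_def)
    also have "\<dots> = of_real N" unfolding N_def by (simp add: mcnj mult.commute)
    finally show ?thesis .
  qed
  have expand: "Q (\<lambda>x. 1 + of_real t * r x) = of_real (2 * t * N) + (of_real t)^2 * Q r" for t
  proof -
    have "Q (\<lambda>x. 1 + of_real t * r x) = (\<Sum>x\<in>I. \<Sum>y\<in>I. A x y + of_real t * (A x y * r y) + of_real t * (cnj (r x) * A x y)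
        + (of_real t)^2 * (cnj (r x) * A x y * r y))"
      unfolding Q_def by (intro sum.cong refl) (simp add: algebra_simps power2_eq_square)
    also have "\<dots> = (\<Sum>x\<in>I. \<Sum>y\<in>I. A x y) + of_real t * (\<Sum>x\<in>I. \<Sum>y\<in>I. A x y * r y)
        + of_real t * (\<Sum>x\<in>I. \<Sum>y\<in>I. cnj (r x) * A x y) + (of_real t)^2 * Q r"
      unfolding Q_def by (simp add: sum.distrib sum_distrib_left)
    also have "\<dots> = of_real (2 * t * N) + (of_real t)^2 * Q r"
      unfolding z S1 S2 by simp
    finally show ?thesis .
  qed
  define q where "q = Re (Q r)"
  have q0: "q \<ge> 0" unfolding q_def Q_def using density_form[OF D, of r] by (rule conjunct2)
  have nonneg: "0 \<le> 2 * t * N + t^2 * q" for t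
  proof -
    have "0 \<le> Re (Q (\<lambda>x. 1 + of_real t * r x))" unfolding Q_def
      using density_form[OF D, of "\<lambda>x. 1 + of_real t * r x"] by (rule conjunct2)
    also have "Re (Q (\<lambda>x. 1 + of_real t * r x)) = 2 * t * N + t^2 * q"
      unfolding expand q_def by (simp add: power2_eq_square)
    finally show ?thesis .
  qed
  have N0: "N \<ge> 0" unfolding N_def by (simp add: sum_nonneg)
  have "N = 0"
  proof (rule ccontr)
    assume "N \<noteq> 0"
    then have Np: "N > 0" using N0 by simp
    define s where "s = q + 1"
    have s0: "s > 0" using q0 s_def by simp
    have "0 \<le> 2 * (- N / s) * N + (- N / s)^2 * q" by (rule nonneg)
    also have "\<dots> = N^2 * (- 2 * s + q) / s^2"
      using s0 by (simp add: field_simps power2_eq_square)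
    also have "\<dots> < 0"
      using Np q0 s0 unfolding s_def by (intro divide_neg_pos mult_pos_neg) auto
    finally show False by simp
  qed
  then have "\<forall>x\<in>I. (cmod (r x))\<^sup>2 = 0" unfolding N_def using fin
    by (subst (asm) sum_nonneg_eq_0_iff) auto
  then show ?thesis unfolding r_def by simp
qed

definition Le :: "vertex set \<Rightarrow> gmatrix" where
  "Le e x y = (if x \<in> e \<and> y \<in> e then (if x = y then 1 else -1) else 0)"

definition gam :: "vertex set \<Rightarrow> vertex set" where
  "gam e = {(fst v, snd u) | u v. u \<in> e \<and> v \<in> e \<and> u \<noteq> v}"

lemma gg_edge: "grid_graph a b E \<Longrightarrow> e \<in> E \<Longrightarrow> \<exists>u v. e = {u, v} \<and> u \<noteq> v \<and> u \<in> grid a b \<and> v \<in> grid a b"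
  unfolding grid_graph_def by blast

lemma finite_grid: "finite (grid a b)" unfolding grid_def by simp

lemma gg_finite: assumes "grid_graph a b E" shows "finite E"
proof -
  have "E \<subseteq> Pow (grid a b)" using gg_edge[OF assms] by blast
  then show ?thesis using finite_grid by (meson finite_Pow_iff finite_subset)
qed

lemma Le_pair: "u \<noteq> v \<Longrightarrow> Le {u, v} x y = Lp u v x y"
  unfolding Le_def Lp_def ev_def by auto

lemma gam_pair: assumes "u \<noteq> v" shows "gam {u, v} = {(fst v, snd u), (fst u, snd v)}"
proof
  show "gam {u, v} \<subseteq> {(fst v, snd u), (fst u, snd v)}" unfolding gam_def by auto
  have "(fst v, snd u) \<in> gam {u, v}" unfolding gam_def using assms by blast
  moreover have "(fst u, snd v) \<in> gam {u, v}" unfolding gam_def using assms by blast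
  ultimately show "{(fst v, snd u), (fst u, snd v)} \<subseteq> gam {u, v}" by blast
qed

lemma gam_pair_ne: "u \<noteq> v \<Longrightarrow> (fst v, snd u) \<noteq> (fst u, snd v)"
  by (cases u, cases v) auto

lemma gam_gam: "u \<noteq> v \<Longrightarrow> gam (gam {u, v}) = {u, v}"
  using gam_pair_ne[of u v] by (simp add: gam_pair)

lemma gam_inj: assumes "grid_graph a b E" shows "inj_on gam E"
proof (rule inj_onI)
  fix e e' assume "e \<in> E" "e' \<in> E" "gam e = gam e'"
  then obtain u v u' v' where "e = {u, v}" "u \<noteq> v" "e' = {u', v'}" "u' \<noteq> v'"
    using gg_edge[OF assms] by metis
  then show "e = e'" using \<open>gam e = gam e'\<close> gam_gam by metis
qed

lemma pt_img: assumes "grid_graph a b E" shows "partial_transpose E = gam ` E"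
proof
  show "partial_transpose E \<subseteq> gam ` E"
  proof
    fix f assume "f \<in> partial_transpose E"
    then obtain i j k l where f: "f = {(k, j), (i, l)}" and e: "{(i, j), (k, l)} \<in> E"
      unfolding partial_transpose_def by blast
    then obtain u v where "{(i, j), (k, l)} = {u, v}" "u \<noteq> v" using gg_edge[OF assms] by metis
    then have ne: "(i, j) \<noteq> (k, l)" by auto
    then have "gam {(i, j), (k, l)} = f" unfolding f by (simp add: gam_pair insert_commute)
    then show "f \<in> gam ` E" using e by blast
  qed
next
  show "gam ` E \<subseteq> partial_transpose E"
  proof
    fix f assume "f \<in> gam ` E"
    then obtain e where e: "e \<in> E" "f = gam e" by blast
    then obtain u v where uv: "e = {u, v}" "u \<noteq> v" using gg_edge[OF assms] by metis
    have "f = {(fst v, snd u), (fst u, snd v)}" using e uv by (simp add: gam_pair)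
    moreover have "{(fst u, snd u), (fst v, snd v)} \<in> E" using e uv by simp
    ultimately show "f \<in> partial_transpose E" unfolding partial_transpose_def by blast
  qed
qed

lemma deg_sum: "finite E \<Longrightarrow> (of_nat (deg E w) :: complex) = (\<Sum>e\<in>E. if w \<in> e then 1 else 0)"
  unfolding deg_def by (simp add: sum.inter_filter[symmetric])

lemma deg_pt_sum:
  assumes "grid_graph a b E"
  shows "(of_nat (deg (partial_transpose E) w) :: complex) = (\<Sum>e\<in>E. if w \<in> gam e then 1 else 0)"
proof -
  have fin: "finite E" by (rule gg_finite[OF assms])
  have "{f \<in> gam ` E. w \<in> f} = gam ` {e \<in> E. w \<in> gam e}" by blast
  moreover have "inj_on gam {e \<in> E. w \<in> gam e}" using gam_inj[OF assms] by (rule inj_on_subset) blast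
  ultimately have "deg (partial_transpose E) w = card {e \<in> E. w \<in> gam e}"
    unfolding deg_def pt_img[OF assms] by (simp add: card_image)
  then show ?thesis using fin by (simp add: sum.inter_filter[symmetric])
qed

lemma laplacian_sum:
  assumes "grid_graph a b E"
  shows "laplacian E x y = (\<Sum>e\<in>E. Le e x y)"
proof -
  have fin: "finite E" by (rule gg_finite[OF assms])
  show ?thesis
  proof (cases "x = y")
    case True
    have "{x} \<notin> E"
    proof
      assume "{x} \<in> E"
      then obtain u v where "{x} = {u, v}" "u \<noteq> v" using gg_edge[OF assms] by metis
      then show False by blast
    qed
    then have "adjacency_matrix E x y = 0" unfolding adjacency_matrix_def True by simp
    then show ?thesis unfolding laplacian_def degree_matrix_def True Le_def
      using deg_sum[OF fin, of y] by simp
  next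
    case False
    have "{e \<in> E. x \<in> e \<and> y \<in> e} = (if {x, y} \<in> E then {{x, y}} else {})"
    proof -
      have "e = {x, y}" if ee: "e \<in> E" "x \<in> e" "y \<in> e" for e
      proof -
        obtain u v where "e = {u, v}" "u \<noteq> v" using gg_edge[OF assms ee(1)] by blast
        then show ?thesis using ee False by auto
      qed
      then have A: "{e \<in> E. x \<in> e \<and> y \<in> e} \<subseteq> {{x, y}}" by (intro subsetI) simp
      show ?thesis
      proof (cases "{x, y} \<in> E")
        case True
        then have "{x, y} \<in> {e \<in> E. x \<in> e \<and> y \<in> e}" by simp
        then show ?thesis using A True by (simp only: if_True) (intro subset_antisym; simp)
      next
        case F: False
        have "{x, y} \<notin> {e \<in> E. x \<in> e \<and> y \<in> e}" using F by simp
        have "{e \<in> E. x \<in> e \<and> y \<in> e} = {}" using A F by blast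
        then show ?thesis using F by simp
      qed
    qed
    then have "(\<Sum>e\<in>E. Le e x y) = - (if {x, y} \<in> E then 1 else 0)"
      unfolding Le_def using False fin
      by (simp add: sum.inter_filter[symmetric] sum_negf[symmetric] del: sum.inter_filter)
    then show ?thesis unfolding laplacian_def degree_matrix_def adjacency_matrix_def using False by simp
  qed
qed

lemma ev_row: "snd u < b \<Longrightarrow> (\<Sum>j'<b. ev u (i, j')) = (if fst u = i then 1 else 0)"
proof -
  assume h: "snd u < b"
  have "(\<Sum>j'<b. ev u (i, j')) = (\<Sum>j'<b. if j' = snd u then (if fst u = i then 1 else 0) else 0)"
    unfolding ev_def by (intro sum.cong refl) (auto simp: prod_eq_iff)
  also have "\<dots> = (if fst u = i then 1 else 0)" using h by (simp add: sum.delta)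
  finally show ?thesis .
qed

lemma ev_col: "fst u < a \<Longrightarrow> (\<Sum>i'<a. ev u (i', j)) = (if snd u = j then 1 else 0)"
proof -
  assume h: "fst u < a"
  have "(\<Sum>i'<a. ev u (i', j)) = (\<Sum>i'<a. if i' = fst u then (if snd u = j then 1 else 0) else 0)"
    unfolding ev_def by (intro sum.cong refl) (auto simp: prod_eq_iff)
  also have "\<dots> = (if snd u = j then 1 else 0)" using h by (simp add: sum.delta)
  finally show ?thesis .
qed

lemma ev_grid: "u \<in> grid a b \<Longrightarrow> (\<Sum>x\<in>grid a b. ev u x) = 1"
  unfolding ev_def using finite_grid by (simp add: sum.delta')

lemma Lp_allsum:
  assumes "u \<in> grid a b" "v \<in> grid a b"
  shows "(\<Sum>x\<in>grid a b. \<Sum>y\<in>grid a b. Lp u v x y) = 0"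
proof -
  have "(\<Sum>x\<in>grid a b. \<Sum>y\<in>grid a b. Lp u v x y)
      = (\<Sum>x\<in>grid a b. ev u x - ev v x) * (\<Sum>y\<in>grid a b. ev u y - ev v y)"
    unfolding Lp_def by (rule sum_product[symmetric])
  also have "\<dots> = 0" using assms by (simp add: sum_subtractf ev_grid)
  finally show ?thesis .
qed

lemma Lp_trace:
  assumes "u \<in> grid a b" "v \<in> grid a b" "u \<noteq> v"
  shows "(\<Sum>x\<in>grid a b. Lp u v x x) = 2"
proof -
  have "(\<Sum>x\<in>grid a b. Lp u v x x) = (\<Sum>x\<in>grid a b. ev u x + ev v x)"
    unfolding Lp_def using assms(3) by (intro sum.cong refl) (auto simp: ev_def)
  also have "\<dots> = 2" using assms by (simp add: sum.distrib ev_grid)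
  finally show ?thesis .
qed

lemma Lp_ptrow:
  assumes "u \<in> grid 2 b" "v \<in> grid 2 b" "u \<noteq> v"
  shows "(\<Sum>i'<2. \<Sum>j'<b. Lp u v (i, j') (i', j))
    = (if (i, j) \<in> {u, v} then 1 else 0) - (if (i, j) \<in> gam {u, v} then 1 else 0)"
proof -
  have fu: "fst u < 2" "snd u < b" "fst v < 2" "snd v < b" using assms unfolding grid_def by auto
  have "(\<Sum>i'<2. \<Sum>j'<b. Lp u v (i, j') (i', j))
      = (\<Sum>i'<2. \<Sum>j'<b. (ev u (i', j) - ev v (i', j)) * (ev u (i, j') - ev v (i, j')))"
    unfolding Lp_def by (simp add: mult.commute)
  also have "\<dots> = (\<Sum>i'<2. ev u (i', j) - ev v (i', j)) * (\<Sum>j'<b. ev u (i, j') - ev v (i, j'))"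
    by (rule sum_product[symmetric])
  also have "\<dots> = ((if snd u = j then 1 else 0) - (if snd v = j then 1 else 0))
      * ((if fst u = i then 1 else 0) - (if fst v = i then 1 else 0))"
    using fu by (simp add: sum_subtractf ev_row ev_col)
  also have "\<dots> = (if (i, j) \<in> {u, v} then 1 else 0) - (if (i, j) \<in> gam {u, v} then 1 else 0)"
    using assms(3) gam_pair_ne[OF assms(3)] unfolding gam_pair[OF assms(3)]
    by (cases u, cases v) auto
  finally show ?thesis .
qed

lemma degdiff:
  assumes "grid_graph a b E"
  shows "(of_nat (deg E w) :: complex) - of_nat (deg (partial_transpose E) w)
     = (\<Sum>e\<in>E. (if w \<in> e then 1 else 0) - (if w \<in> gam e then 1 else 0))"
  by (simp add: deg_sum[OF gg_finite[OF assms]] deg_pt_sum[OF assms] sum_subtractf)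

lemma Le_allsum:
  assumes "grid_graph a b E" "e \<in> E"
  shows "(\<Sum>x\<in>grid a b. \<Sum>y\<in>grid a b. Le e x y) = 0"
proof -
  obtain u v where "e = {u, v}" "u \<noteq> v" "u \<in> grid a b" "v \<in> grid a b" using gg_edge[OF assms] by blast
  then show ?thesis using Lp_allsum by (simp add: Le_pair)
qed

lemma Le_trace:
  assumes "grid_graph a b E" "e \<in> E"
  shows "(\<Sum>x\<in>grid a b. Le e x x) = 2"
proof -
  obtain u v where "e = {u, v}" "u \<noteq> v" "u \<in> grid a b" "v \<in> grid a b" using gg_edge[OF assms] by blast
  then show ?thesis using Lp_trace by (simp add: Le_pair)
qed

lemma Le_ptrow:
  assumes "grid_graph 2 b E" "e \<in> E"
  shows "(\<Sum>i'<2. \<Sum>j'<b. Le e (i, j') (i', j)) = (if (i, j) \<in> e then 1 else 0) - (if (i, j) \<in> gam e then 1 else 0)"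
proof -
  obtain u v where "e = {u, v}" "u \<noteq> v" "u \<in> grid 2 b" "v \<in> grid 2 b" using gg_edge[OF assms] by blast
  then show ?thesis using Lp_ptrow by (simp add: Le_pair)
qed

lemma sum_grid_prod:
  "(\<Sum>x\<in>grid a b. \<Sum>y\<in>grid a b. f (fst x) (fst y) * g (snd x) (snd y))
    = (\<Sum>i<a. \<Sum>i'<a. f i i') * (\<Sum>j<b. \<Sum>j'<b. (g j j' :: complex))"
proof -
  have "(\<Sum>x\<in>grid a b. \<Sum>y\<in>grid a b. f (fst x) (fst y) * g (snd x) (snd y))
     = (\<Sum>i<a. \<Sum>j<b. \<Sum>i'<a. \<Sum>j'<b. f i i' * g j j')"
    by (simp add: sum_grid)
  also have "\<dots> = (\<Sum>i<a. \<Sum>i'<a. \<Sum>j<b. \<Sum>j'<b. f i i' * g j j')"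
    by (rule sum.cong[OF refl], rule sum.swap)
  also have "\<dots> = (\<Sum>i<a. \<Sum>i'<a. f i i' * (\<Sum>j<b. \<Sum>j'<b. g j j'))"
    by (simp add: sum_distrib_left)
  also have "\<dots> = (\<Sum>i<a. \<Sum>i'<a. f i i') * (\<Sum>j<b. \<Sum>j'<b. g j j')"
    by (simp add: sum_distrib_right)
  finally show ?thesis .
qed

lemma sum_rowcol:
  "(\<Sum>i'<a. \<Sum>j'<b. f i i' * (g j' j :: complex)) = (\<Sum>i'<a. f i i') * (\<Sum>j'<b. g j' j)"
  by (simp add: sum_product)

lemma necessity:
  assumes G: "grid_graph 2 b E" and ne: "E \<noteq> {}" and S: "separable 2 b (rho E)"
  shows "\<forall>w\<in>grid 2 b. deg E w = deg (partial_transpose E) w"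
proof
  fix w assume w: "w \<in> grid 2 b"
  obtain i j where wij: "w = (i, j)" by (cases w)
  have fin: "finite E" by (rule gg_finite[OF G])
  define m where "m = card E"
  have m0: "m > 0" using fin ne unfolding m_def by (simp add: card_gt_0_iff)
  have rhoL: "rho E x y = laplacian E x y / of_nat (2 * m)" for x y unfolding rho_def m_def by simp
  obtain n and p :: "nat \<Rightarrow> real" and A B where
    p0: "\<forall>k<n. p k \<ge> 0" and dens: "\<forall>k<n. density {0..<2} (A k) \<and> density {0..<b} (B k)"
    and dec: "\<forall>u\<in>grid 2 b. \<forall>v\<in>grid 2 b. rho E u v = (\<Sum>k<n. of_real (p k) * A k (fst u) (fst v) * B k (snd u) (snd v))"
    using S unfolding separable_def by blast
  define SA where "SA k = (\<Sum>i<2. \<Sum>i'<2. A k i i')" for k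
  define SB where "SB k = (\<Sum>j<b. \<Sum>j'<b. B k j j')" for k
  have allL: "(\<Sum>x\<in>grid 2 b. \<Sum>y\<in>grid 2 b. laplacian E x y) = 0"
  proof -
    have "(\<Sum>x\<in>grid 2 b. \<Sum>y\<in>grid 2 b. laplacian E x y) = (\<Sum>x\<in>grid 2 b. \<Sum>y\<in>grid 2 b. \<Sum>e\<in>E. Le e x y)"
      by (simp add: laplacian_sum[OF G])
    also have "\<dots> = (\<Sum>e\<in>E. \<Sum>x\<in>grid 2 b. \<Sum>y\<in>grid 2 b. Le e x y)"
      by (subst sum.swap, rule sum.cong[OF refl], subst sum.swap, rule refl)
    also have "\<dots> = 0" using Le_allsum[OF G] by simp
    finally show ?thesis .
  qed
  have "(\<Sum>x\<in>grid 2 b. \<Sum>y\<in>grid 2 b. rho E x y) = (\<Sum>k<n. of_real (p k) * (SA k * SB k))"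
  proof -
    have "(\<Sum>x\<in>grid 2 b. \<Sum>y\<in>grid 2 b. rho E x y)
        = (\<Sum>x\<in>grid 2 b. \<Sum>y\<in>grid 2 b. \<Sum>k<n. of_real (p k) * (A k (fst x) (fst y) * B k (snd x) (snd y)))"
      using dec by (intro sum.cong refl) (simp add: mult.assoc)
    also have "\<dots> = (\<Sum>k<n. \<Sum>x\<in>grid 2 b. \<Sum>y\<in>grid 2 b. of_real (p k) * (A k (fst x) (fst y) * B k (snd x) (snd y)))"
      by (subst sum.swap, rule sum.cong[OF refl], subst sum.swap, rule refl)
    also have "\<dots> = (\<Sum>k<n. of_real (p k) * (SA k * SB k))"
      unfolding SA_def SB_def by (simp only: sum_distrib_left[symmetric] sum_grid_prod)
    finally show ?thesis .
  qed
  moreover have "(\<Sum>x\<in>grid 2 b. \<Sum>y\<in>grid 2 b. rho E x y) = 0"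
    using allL by (simp add: rhoL sum_divide_distrib[symmetric])
  ultimately have tot: "(\<Sum>k<n. of_real (p k) * (SA k * SB k)) = (0::complex)" by simp
  have SAr: "SA k = of_real (Re (SA k)) \<and> Re (SA k) \<ge> 0" if "k < n" for k
    using density_allsum[of "{0..<2}" "A k"] dens that unfolding SA_def by (simp add: atLeast0LessThan)
  have SBr: "SB k = of_real (Re (SB k)) \<and> Re (SB k) \<ge> 0" if "k < n" for k
    using density_allsum[of "{0..<b}" "B k"] dens that unfolding SB_def by (simp add: atLeast0LessThan)
  have "(\<Sum>k<n. p k * (Re (SA k) * Re (SB k))) = 0"
  proof -
    have "(\<Sum>k<n. of_real (p k) * (SA k * SB k)) = (\<Sum>k<n. of_real (p k * (Re (SA k) * Re (SB k))) :: complex)"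
    proof (rule sum.cong[OF refl])
      fix k assume "k \<in> {..<n}"
      then have "SA k = of_real (Re (SA k))" "SB k = of_real (Re (SB k))" using SAr SBr by auto
      then show "of_real (p k) * (SA k * SB k) = (of_real (p k * (Re (SA k) * Re (SB k))) :: complex)"
        by (metis of_real_mult)
    qed
    then have "of_real (\<Sum>k<n. p k * (Re (SA k) * Re (SB k))) = (0::complex)" using tot by (simp add: of_real_sum)
    then show ?thesis by (simp only: of_real_eq_0_iff)
  qed
  then have each: "p k * (Re (SA k) * Re (SB k)) = 0" if "k < n" for k
    using that p0 SAr SBr by (subst (asm) sum_nonneg_eq_0_iff) auto
  have term0: "of_real (p k) * ((\<Sum>i'<2. A k i i') * (\<Sum>j'<b. B k j' j)) = 0" if k: "k < n" for k
  proof -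
    have dA: "density {0..<2} (A k)" and dB: "density {0..<b} (B k)" using dens k by auto
    have ij: "i < 2" "j < b" using w wij unfolding grid_def by auto
    consider "p k = 0" | "Re (SA k) = 0" | "Re (SB k) = 0" using each[OF k] by auto
    then show ?thesis
    proof cases
      case 1 then show ?thesis by simp
    next
      case 2
      then have "SA k = 0" using SAr[OF k] by simp
      then have "(\<Sum>x\<in>{0..<2}. \<Sum>y\<in>{0..<2}. A k x y) = 0" unfolding SA_def by (simp add: atLeast0LessThan)
      then have "\<forall>x\<in>{0..<2}. (\<Sum>y\<in>{0..<2}. A k x y) = 0" by (rule kernel[OF _ dA, rotated]) simp
      then have "(\<Sum>i'<2. A k i i') = 0" using ij by (simp add: atLeast0LessThan)
      then show ?thesis by simp
    next
      case 3
      then have "SB k = 0" using SBr[OF k] by simp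
      then have "(\<Sum>x\<in>{0..<b}. \<Sum>y\<in>{0..<b}. B k x y) = 0" unfolding SB_def by (simp add: atLeast0LessThan)
      then have "\<forall>x\<in>{0..<b}. (\<Sum>y\<in>{0..<b}. B k x y) = 0" by (rule kernel[OF _ dB, rotated]) simp
      then have r: "(\<Sum>j'<b. B k j j') = 0" using ij by (simp add: atLeast0LessThan)
      have "(\<Sum>j'<b. B k j' j) = cnj (\<Sum>j'<b. B k j j')"
        unfolding cnj_sum using ij by (intro sum.cong refl) (rule density_herm[OF dB], auto)
      then have "(\<Sum>j'<b. B k j' j) = 0" using r by simp
      then show ?thesis by simp
    qed
  qed
  have R0: "(\<Sum>i'<2. \<Sum>j'<b. rho E (i, j') (i', j)) = 0"
  proof -
    have ij: "i < 2" "j < b" using w wij unfolding grid_def by auto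
    have "(\<Sum>i'<2. \<Sum>j'<b. rho E (i, j') (i', j))
       = (\<Sum>i'<2. \<Sum>j'<b. \<Sum>k<n. of_real (p k) * (A k i i' * B k j' j))"
      using dec ij by (intro sum.cong refl) (simp add: grid_def mult.assoc)
    also have "\<dots> = (\<Sum>k<n. \<Sum>i'<2. \<Sum>j'<b. of_real (p k) * (A k i i' * B k j' j))"
      by (subst sum.swap, rule sum.cong[OF refl], subst sum.swap, rule refl)
    also have "\<dots> = (\<Sum>k<n. of_real (p k) * ((\<Sum>i'<2. A k i i') * (\<Sum>j'<b. B k j' j)))"
    proof (rule sum.cong[OF refl])
      fix k
      have sp: "(\<Sum>i'<2. A k i i') * (\<Sum>j'<b. B k j' j) = (\<Sum>i'<2. \<Sum>j'<b. A k i i' * B k j' j)"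
        by (rule sum_product)
      show "(\<Sum>i'<2. \<Sum>j'<b. of_real (p k) * (A k i i' * B k j' j)) = of_real (p k) * ((\<Sum>i'<2. A k i i') * (\<Sum>j'<b. B k j' j))"
        unfolding sp by (simp add: sum_distrib_left)
    qed
    also have "\<dots> = 0" using term0 by (intro sum.neutral ballI) simp
    finally show ?thesis .
  qed
  have "(\<Sum>i'<2. \<Sum>j'<b. laplacian E (i, j') (i', j)) = of_nat (deg E w) - of_nat (deg (partial_transpose E) w)"
  proof -
    have "(\<Sum>i'<2. \<Sum>j'<b. laplacian E (i, j') (i', j)) = (\<Sum>i'<2. \<Sum>j'<b. \<Sum>e\<in>E. Le e (i, j') (i', j))"
      by (simp add: laplacian_sum[OF G])
    also have "\<dots> = (\<Sum>e\<in>E. \<Sum>i'<2. \<Sum>j'<b. Le e (i, j') (i', j))"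
      by (subst sum.swap, rule sum.cong[OF refl], subst sum.swap, rule refl)
    also have "\<dots> = (\<Sum>e\<in>E. (if w \<in> e then 1 else 0) - (if w \<in> gam e then 1 else 0))"
      unfolding wij by (intro sum.cong refl) (rule Le_ptrow[OF G])
    also have "\<dots> = of_nat (deg E w) - of_nat (deg (partial_transpose E) w)"
      by (rule degdiff[OF G, symmetric])
    finally show ?thesis .
  qed
  moreover have "(\<Sum>i'<2. \<Sum>j'<b. laplacian E (i, j') (i', j)) = 0"
  proof -
    have "(\<Sum>i'<2. \<Sum>j'<b. rho E (i, j') (i', j)) = (\<Sum>i'<2. \<Sum>j'<b. laplacian E (i, j') (i', j)) / of_nat (2 * m)"
      by (simp add: rhoL sum_divide_distrib)
    then show ?thesis using R0 m0 by simp
  qed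
  ultimately have "(of_nat (deg E w) :: complex) = of_nat (deg (partial_transpose E) w)" by simp
  then show "deg E w = deg (partial_transpose E) w" by (simp only: of_nat_eq_iff)
qed

lemma Lp_prod_row:
  assumes "fst u = fst v"
  shows "Lp u v x y = (\<lambda>i. if i = fst u then 1 else 0) (fst x) * cnj ((\<lambda>i. if i = fst u then 1 else 0) (fst y))
     * ((\<lambda>j. (if j = snd u then 1 else 0) - (if j = snd v then 1 else 0)) (snd x)
        * cnj ((\<lambda>j. (if j = snd u then 1 else 0) - (if j = snd v then 1 else 0)) (snd y)))"
  using assms by (cases u; cases v; cases x; cases y) (auto simp: Lp_def ev_def)

lemma Lp_prod_col:
  assumes "snd u = snd v"
  shows "Lp u v x y = (\<lambda>i. (if i = fst u then 1 else 0) - (if i = fst v then 1 else 0)) (fst x)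
        * cnj ((\<lambda>i. (if i = fst u then 1 else 0) - (if i = fst v then 1 else 0)) (fst y))
     * ((\<lambda>j. if j = snd u then 1 else 0) (snd x) * cnj ((\<lambda>j. if j = snd u then 1 else 0) (snd y)))"
  using assms by (cases u; cases v; cases x; cases y) (auto simp: Lp_def ev_def)

lemma gam_nd: "u \<noteq> v \<Longrightarrow> fst u = fst v \<or> snd u = snd v \<Longrightarrow> gam {u, v} = {u, v}"
  by (cases u; cases v) (auto simp: gam_pair)

lemma sufficiency:
  assumes G: "grid_graph 2 b E" and ne: "E \<noteq> {}"
    and D: "\<forall>w\<in>grid 2 b. deg E w = deg (partial_transpose E) w"
  shows "separable 2 b (rho E)"
proof -
  have fin: "finite E" by (rule gg_finite[OF G])
  define m where "m = card E"
  have m0: "m > 0" using fin ne unfolding m_def by (simp add: card_gt_0_iff)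
  define Pnd where "Pnd e \<longleftrightarrow> (\<exists>u v. e = {u, v} \<and> u \<noteq> v \<and> (fst u = fst v \<or> snd u = snd v))" for e :: "vertex set"
  define E1 where "E1 = {e \<in> E. Pnd e}"
  define E2 where "E2 = {e \<in> E. \<not> Pnd e}"
  define pe where "pe p = {(0::nat, fst p), (1::nat, snd p)}" for p :: "nat \<times> nat"
  define F where "F = {p. pe p \<in> E \<and> fst p \<noteq> snd p}"
  have EU: "E = E1 \<union> E2" and Edisj: "E1 \<inter> E2 = {}" unfolding E1_def E2_def by auto
  have fin1: "finite E1" "finite E2" using fin unfolding E1_def E2_def by auto
  have Fsub: "F \<subseteq> {..<b} \<times> {..<b}"
  proof
    fix p assume "p \<in> F"
    then have pE: "pe p \<in> E" by (simp add: F_def)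
    then obtain u v where uv: "pe p = {u, v}" "u \<in> grid 2 b" "v \<in> grid 2 b" using gg_edge[OF G] by metis
    then have sub: "pe p \<subseteq> grid 2 b" by simp
    have "(0, fst p) \<in> pe p" "(1, snd p) \<in> pe p" unfolding pe_def by simp_all
    then have "(0, fst p) \<in> grid 2 b" "(1, snd p) \<in> grid 2 b" using sub by blast+
    then show "p \<in> {..<b} \<times> {..<b}" unfolding grid_def by (cases p) auto
  qed
  have finF: "finite F" using Fsub by (rule finite_subset) simp
  have injpe: "inj_on pe F"
  proof (rule inj_onI)
    fix p q assume "pe p = pe q"
    then show "p = q" unfolding pe_def by (cases p; cases q) (auto simp: doubleton_eq_iff)
  qed
  have E2F: "E2 = pe ` F"
  proof
    show "E2 \<subseteq> pe ` F"
    proof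
      fix e assume "e \<in> E2"
      then have eE: "e \<in> E" and nP: "\<not> Pnd e" unfolding E2_def by auto
      obtain u v where uv: "e = {u, v}" "u \<noteq> v" "u \<in> grid 2 b" "v \<in> grid 2 b" using gg_edge[OF G eE] by blast
      have dif: "fst u \<noteq> fst v" "snd u \<noteq> snd v" using nP uv unfolding Pnd_def by blast+
      have "fst u < 2" "fst v < 2" using uv unfolding grid_def by auto
      then consider "fst u = 0" "fst v = 1" | "fst u = 1" "fst v = 0" using dif by arith
      then show "e \<in> pe ` F"
      proof cases
        case 1
        then have "e = pe (snd u, snd v)" unfolding uv pe_def by (cases u; cases v) auto
        moreover have "(snd u, snd v) \<in> F" unfolding F_def using calculation eE dif by auto
        ultimately show ?thesis by blast
      next
        case 2
        then have "e = pe (snd v, snd u)" unfolding uv pe_def by (cases u; cases v) auto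
        moreover have "(snd v, snd u) \<in> F" unfolding F_def using calculation eE dif by auto
        ultimately show ?thesis by blast
      qed
    qed
  next
    show "pe ` F \<subseteq> E2"
    proof
      fix e assume "e \<in> pe ` F"
      then obtain p where p: "p \<in> F" "e = pe p" by blast
      have "\<not> Pnd e"
      proof
        assume "Pnd e"
        then obtain u v where uv: "e = {u, v}" "u \<noteq> v" "fst u = fst v \<or> snd u = snd v" unfolding Pnd_def by blast
        have "{u, v} = {(0, fst p), (1, snd p)}" using uv p unfolding pe_def by simp
        then show False using uv(2,3) p(1) unfolding F_def by (auto simp: doubleton_eq_iff)
      qed
      then show "e \<in> E2" using p unfolding E2_def F_def by auto
    qed
  qed
  have Lsplit: "laplacian E x y = (\<Sum>e\<in>E1. Le e x y) + (\<Sum>p\<in>F. Lp (0, fst p) (1, snd p) x y)" for x y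
  proof -
    have "laplacian E x y = (\<Sum>e\<in>E. Le e x y)" by (rule laplacian_sum[OF G])
    also have "\<dots> = (\<Sum>e\<in>E1. Le e x y) + (\<Sum>e\<in>E2. Le e x y)"
      unfolding EU using fin1 Edisj by (rule sum.union_disjoint)
    also have "(\<Sum>e\<in>E2. Le e x y) = (\<Sum>p\<in>F. Le (pe p) x y)"
      unfolding E2F by (rule sum.reindex[OF injpe, unfolded comp_def])
    also have "\<dots> = (\<Sum>p\<in>F. Lp (0, fst p) (1, snd p) x y)"
      unfolding pe_def by (intro sum.cong refl) (simp add: Le_pair)
    finally show ?thesis .
  qed
  have c1: "sepc 2 b (\<lambda>x y. \<Sum>e\<in>E1. Le e x y)"
  proof (rule sepc_sum[OF fin1(1)], intro ballI)
    fix e assume "e \<in> E1"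
    then obtain u v where uv: "e = {u, v}" "u \<noteq> v" "fst u = fst v \<or> snd u = snd v"
      unfolding E1_def Pnd_def by blast
    then consider "fst u = fst v" | "snd u = snd v" by blast
    then show "sepc 2 b (Le e)"
    proof cases
      case 1
      show ?thesis
        unfolding uv(1)
        by (rule sepc_cong[OF sepc_rank1[where x = "\<lambda>i. if i = fst u then 1 else 0"
              and y = "\<lambda>j. (if j = snd u then 1 else 0) - (if j = snd v then 1 else 0)"]], intro ballI)
          (simp only: Le_pair[OF uv(2)] Lp_prod_row[OF 1])
    next
      case 2
      show ?thesis
        unfolding uv(1)
        by (rule sepc_cong[OF sepc_rank1[where x = "\<lambda>i. (if i = fst u then 1 else 0) - (if i = fst v then 1 else 0)"
              and y = "\<lambda>j. if j = snd u then 1 else 0"]], intro ballI)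
          (simp only: Le_pair[OF uv(2)] Lp_prod_col[OF 2])
    qed
  qed
  have balF: "bal F"
    unfolding bal_def
  proof
    fix j
    show "(\<Sum>p\<in>F. if fst p = j then 1 else 0::nat) = (\<Sum>p\<in>F. if snd p = j then 1 else 0)"
    proof (cases "j < b")
      case False
      then have "\<forall>p\<in>F. fst p \<noteq> j \<and> snd p \<noteq> j" using Fsub by fastforce
      then show ?thesis by simp
    next
      case True
      define w where "w = (0::nat, j)"
      have wg: "w \<in> grid 2 b" unfolding w_def grid_def using True by simp
      have "(0::complex) = of_nat (deg E w) - of_nat (deg (partial_transpose E) w)" using D wg by simp
      also have "\<dots> = (\<Sum>e\<in>E. (if w \<in> e then 1 else 0) - (if w \<in> gam e then 1 else 0))"
        by (rule degdiff[OF G])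
      also have "\<dots> = (\<Sum>e\<in>E1. (if w \<in> e then 1 else 0) - (if w \<in> gam e then 1 else 0))
          + (\<Sum>e\<in>E2. (if w \<in> e then 1 else 0) - (if w \<in> gam e then 1 else 0))"
        unfolding EU using fin1 Edisj by (rule sum.union_disjoint)
      also have "(\<Sum>e\<in>E1. (if w \<in> e then 1 else 0) - (if w \<in> gam e then 1 else 0)) = (0::complex)"
      proof (rule sum.neutral, rule ballI)
        fix e assume "e \<in> E1"
        then obtain u v where uv: "e = {u, v}" "u \<noteq> v" "fst u = fst v \<or> snd u = snd v"
          unfolding E1_def Pnd_def by blast
        then have "gam e = e" using gam_nd by blast
        then show "(if w \<in> e then 1 else 0) - (if w \<in> gam e then 1 else 0) = (0::complex)" by simp
      qed
      also have "(\<Sum>e\<in>E2. (if w \<in> e then 1 else 0) - (if w \<in> gam e then 1 else 0))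
          = (\<Sum>p\<in>F. (if w \<in> pe p then 1 else 0) - (if w \<in> gam (pe p) then 1 else (0::complex)))"
        unfolding E2F by (rule sum.reindex[OF injpe, unfolded comp_def])
      also have "\<dots> = (\<Sum>p\<in>F. of_nat (if fst p = j then 1 else 0) - of_nat (if snd p = j then 1 else 0))"
        unfolding pe_def w_def by (intro sum.cong refl) (auto simp: gam_pair)
      finally have "of_nat (\<Sum>p\<in>F. if fst p = j then 1 else 0::nat) = (of_nat (\<Sum>p\<in>F. if snd p = j then 1 else 0::nat) :: complex)"
        by (simp add: sum_subtractf of_nat_sum[symmetric] del: of_nat_sum)
      then show ?thesis by (simp only: of_nat_eq_iff)
    qed
  qed
  have c2: "sepc 2 b (\<lambda>x y. \<Sum>p\<in>F. Lp (0, fst p) (1, snd p) x y)"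
    by (rule cycle_decomp[OF finF Fsub balF])
  have cL: "sepc 2 b (laplacian E)"
    by (rule sepc_cong[OF sepc_add[OF c1 c2]]) (simp add: Lsplit)
  have crho: "sepc 2 b (rho E)"
  proof (rule sepc_cong[OF sepc_scale[OF _ cL, of "1 / real (2 * m)"]], simp, intro ballI)
    fix x y
    show "complex_of_real (1 / real (2 * m)) * laplacian E x y = rho E x y"
      unfolding rho_def m_def by simp
  qed
  have tr: "(\<Sum>x\<in>grid 2 b. rho E x x) = 1"
  proof -
    have "(\<Sum>x\<in>grid 2 b. laplacian E x x) = (\<Sum>x\<in>grid 2 b. \<Sum>e\<in>E. Le e x x)"
      by (simp add: laplacian_sum[OF G])
    also have "\<dots> = (\<Sum>e\<in>E. \<Sum>x\<in>grid 2 b. Le e x x)" by (rule sum.swap)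
    also have "\<dots> = (\<Sum>e\<in>E. 2)" using Le_trace[OF G] by simp
    also have "\<dots> = of_nat (2 * m)" unfolding m_def by simp
    finally have "(\<Sum>x\<in>grid 2 b. laplacian E x x) = of_nat (2 * m)" .
    then show ?thesis unfolding rho_def m_def[symmetric] using m0
      by (simp add: sum_divide_distrib[symmetric])
  qed
  show ?thesis by (rule sepc_separable[OF crho tr])
qed

theorem mainTheorem5:
  fixes b :: nat and E :: "vertex set set"
  assumes "b \<ge> 2"
    and "grid_graph 2 b E"
    and "E \<noteq> {}"
  shows "separable 2 b (rho E) \<longleftrightarrow>
         (\<forall>u\<in>grid 2 b. \<forall>v\<in>grid 2 b.
            degree_matrix E u v = degree_matrix (partial_transpose E) u v)"
proof
  assume S: "separable 2 b (rho E)"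
  have d: "\<forall>w\<in>grid 2 b. deg E w = deg (partial_transpose E) w"
    by (rule necessity[OF assms(2,3) S])
  show "\<forall>u\<in>grid 2 b. \<forall>v\<in>grid 2 b. degree_matrix E u v = degree_matrix (partial_transpose E) u v"
    using d by (simp add: degree_matrix_def)
next
  assume H: "\<forall>u\<in>grid 2 b. \<forall>v\<in>grid 2 b. degree_matrix E u v = degree_matrix (partial_transpose E) u v"
  have "\<forall>w\<in>grid 2 b. deg E w = deg (partial_transpose E) w"
  proof
    fix w assume "w \<in> grid 2 b"
    then have "degree_matrix E w w = degree_matrix (partial_transpose E) w w" using H by blast
    then have "(of_nat (deg E w) :: complex) = of_nat (deg (partial_transpose E) w)"
      by (simp add: degree_matrix_def)
    then show "deg E w = deg (partial_transpose E) w" by (simp only: of_nat_eq_iff)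
  qed
  then show "separable 2 b (rho E)" by (rule sufficiency[OF assms(2,3)])
qed

end
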